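(* Let $\mathcal{A}$ be a Mrówka family on $\omega$, and let $X$ and $f\colon X\to\Psi(\mathcal{A})$ be as defined in the context. If $Z$ is a zero-set in $X$, then $f(Z)$ is a zero-set in $\Psi(\mathcal{A})$.
   Context: For a maximal almost disjoint (MAD) family $\mathcal{A}$ of infinite subsets of $\omega$, $\Psi(\mathcal{A})$ is the space with underlying set $\omega\cup\mathcal{A}$ in which points of $\omega$ are isolated and a basic neighbourhood of $A\in\mathcal{A}$ is $\{A\}\cup\{m\in A: m\ge n\}$ for $n\in\omega$. A Mrówka family is a MAD family $\mathcal{A}$ on $\omega$ such that $\Psi(\mathcal{A})$ is almost compact, i.e. its Čech–Stone compactification equals its one-point compactification. Let $K=\{0,1\}^\omega$ be the Cantor set. The space $X$ has underlying set $(\omega\times K)\cup\mathcal{A}$; a basic neighbourhood of $\langle n,k\rangle$ ($n\in\omega$, $k\in K$) is $\{n\}\times C$ with $C$ an open neighbourhood of $k$ in $K$, and a basic neighbourhood of $A\in\mathcal{A}$ is $U_n(A)=\{A\}\cup\bigcup\{\{m\}\times K: m\in A, m\ge n\}$ for $n\in\omega$. The map $f\colon X\to\Psi(\mathcal{A})$ sends $A\in\mathcal{A}$ to $A$ and every point of $\{n\}\times K$ to $n$. A zero-set in a space $S$ is a set of the form $\xi^{-1}(0)$ for a continuous $\xi\colon S\to[0,1]$. *)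

theory Defs
  imports "HOL-Analysis.Analysis"
begin

definition MAD :: "nat set set \<Rightarrow> bool" where
  "MAD \<A> \<longleftrightarrow> infinite \<A> \<and> (\<forall>A\<in>\<A>. infinite A)
     \<and> (\<forall>A\<in>\<A>. \<forall>B\<in>\<A>. A \<noteq> B \<longrightarrow> finite (A \<inter> B))
     \<and> (\<forall>B. infinite B \<longrightarrow> (\<exists>A\<in>\<A>. infinite (A \<inter> B)))"

text \<open>The space Psi(A): points of omega are Inl n, points of A are Inr A.\<close>
definition Psi :: "nat set set \<Rightarrow> (nat + nat set) topology" where
  "Psi \<A> = topology_generated_by
     ({{Inl n} | n. True} \<union>
      {insert (Inr A) (Inl ` {m\<in>A. n \<le> m}) | A n. A \<in> \<A>})"

definition Cantor :: "(nat \<Rightarrow> bool) topology" where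
  "Cantor = product_topology (\<lambda>_. discrete_topology UNIV) UNIV"

definition Xsp :: "nat set set \<Rightarrow> ((nat \<times> (nat \<Rightarrow> bool)) + nat set) topology" where
  "Xsp \<A> = topology_generated_by
     ({Inl ` ({n} \<times> C) | n C. openin Cantor C} \<union>
      {insert (Inr A) (Inl ` ({m\<in>A. n \<le> m} \<times> UNIV)) | A n. A \<in> \<A>})"

fun fmap :: "((nat \<times> (nat \<Rightarrow> bool)) + nat set) \<Rightarrow> (nat + nat set)" where
  "fmap (Inl (n, k)) = Inl n"
| "fmap (Inr A) = Inr A"

definition zero_set_in :: "'a topology \<Rightarrow> 'a set \<Rightarrow> bool" where
  "zero_set_in T Z \<longleftrightarrow> (\<exists>\<xi>. continuous_map T (top_of_set {0..1::real}) \<xi>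
       \<and> Z = {x \<in> topspace T. \<xi> x = 0})"

text \<open>Almost compact: the Cech-Stone compactification equals the one-point
  compactification, i.e. every continuous map into [0,1] extends continuously to the
  one-point compactification (the point at infinity), i.e. converges at infinity.\<close>
definition almost_compact :: "'a topology \<Rightarrow> bool" where
  "almost_compact T \<longleftrightarrow>
     (\<forall>\<xi>. continuous_map T (top_of_set {0..1::real}) \<xi> \<longrightarrow>
        (\<exists>c. \<forall>e>0. \<exists>K. compactin T K \<and> (\<forall>x\<in>topspace T - K. \<bar>\<xi> x - c\<bar> < e)))"

definition Mrowka :: "nat set set \<Rightarrow> bool" where
  "Mrowka \<A> \<longleftrightarrow> MAD \<A> \<and> almost_compact (Psi \<A>)"

end

theory Submission
  imports Defs
begin

lemma nbhdX:
  fixes \<A> :: "nat set set"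
  assumes "generate_topology_on
     ({Inl ` ({n} \<times> C) | n C. openin Cantor C} \<union>
      {insert (Inr A) (Inl ` ({m\<in>A. n \<le> m} \<times> UNIV)) | A n. A \<in> \<A>}) U"
    and "Inr B \<in> U"
  shows "\<exists>n. insert (Inr B) (Inl ` ({m\<in>B. n \<le> m} \<times> UNIV)) \<subseteq> U"
  using assms
proof (induction rule: generate_topology_on.induct)
  case Empty
  then show ?case by simp
next
  case (Int a b)
  from Int.prems have "Inr B \<in> a" "Inr B \<in> b" by simp_all
  then obtain n1 n2 where h1: "insert (Inr B) (Inl ` ({m\<in>B. n1 \<le> m} \<times> UNIV)) \<subseteq> a"
    and h2: "insert (Inr B) (Inl ` ({m\<in>B. n2 \<le> m} \<times> UNIV)) \<subseteq> b"
    using Int.IH by meson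
  have "{m\<in>B. max n1 n2 \<le> m} \<subseteq> {m\<in>B. n1 \<le> m}" "{m\<in>B. max n1 n2 \<le> m} \<subseteq> {m\<in>B. n2 \<le> m}" by auto
  then have "Inl ` ({m\<in>B. max n1 n2 \<le> m} \<times> (UNIV::(nat\<Rightarrow>bool) set)) \<subseteq> Inl ` ({m\<in>B. n1 \<le> m} \<times> UNIV)"
     "Inl ` ({m\<in>B. max n1 n2 \<le> m} \<times> (UNIV::(nat\<Rightarrow>bool) set)) \<subseteq> Inl ` ({m\<in>B. n2 \<le> m} \<times> UNIV)"
    by (intro image_mono Sigma_mono; simp)+
  with h1 h2 have "insert (Inr B) (Inl ` ({m\<in>B. max n1 n2 \<le> m} \<times> UNIV)) \<subseteq> a \<inter> b"
    by (simp add: subset_iff) blast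
  then show ?case by blast
next
  case (UN K)
  from UN.prems obtain k where k: "k \<in> K" "Inr B \<in> k" by (meson UnionE)
  with UN.IH obtain n where "insert (Inr B) (Inl ` ({m\<in>B. n \<le> m} \<times> UNIV)) \<subseteq> k" by meson
  with k have "insert (Inr B) (Inl ` ({m\<in>B. n \<le> m} \<times> UNIV)) \<subseteq> \<Union>K" by blast
  then show ?case by blast
next
  case (Basis s)
  from Basis.hyps show ?case
  proof
    assume "s \<in> {Inl ` ({n} \<times> C) | n C. openin Cantor C}"
    then obtain n C where "s = Inl ` ({n} \<times> C)" by blast
    then have False using Basis.prems by blast
    then show ?case ..
  next
    assume "s \<in> {insert (Inr A) (Inl ` ({m\<in>A. n \<le> m} \<times> UNIV)) | A n. A \<in> \<A>}"
    then obtain A n where s: "s = insert (Inr A) (Inl ` ({m\<in>A. n \<le> m} \<times> UNIV))" by blast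
    with Basis.prems have "A = B" by blast
    with s show ?case by blast
  qed
qed

theorem lemma3p3:
  assumes "Mrowka \<A>"
    and "zero_set_in (Xsp \<A>) Z"
  shows "zero_set_in (Psi \<A>) (fmap ` Z)"
proof -
  obtain \<xi> where cont: "continuous_map (Xsp \<A>) (top_of_set {0..1::real}) \<xi>"
    and Zd: "Z = {x \<in> topspace (Xsp \<A>). \<xi> x = 0}"
    using assms(2) unfolding zero_set_in_def by blast
  have opC: "openin Cantor UNIV"
  proof -
    have "topspace Cantor = UNIV" unfolding Cantor_def by (simp add: PiE_UNIV_domain)
    then show ?thesis by (metis openin_topspace)
  qed
  have topX: "topspace (Xsp \<A>) = range Inl \<union> Inr ` \<A>"
  proof
    show "topspace (Xsp \<A>) \<subseteq> range Inl \<union> Inr ` \<A>"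
      unfolding Xsp_def topology_generated_by_topspace
    proof (rule Union_least)
      fix G assume "G \<in> {Inl ` ({n} \<times> C) | n C. openin Cantor C} \<union>
      {insert (Inr A) (Inl ` ({m\<in>A. n \<le> m} \<times> UNIV)) | A n. A \<in> \<A>}"
      then show "G \<subseteq> range Inl \<union> Inr ` \<A>"
        by (elim UnE CollectE exE conjE) auto
    qed
    show "range Inl \<union> Inr ` \<A> \<subseteq> topspace (Xsp \<A>)"
    proof
      fix x :: "(nat \<times> (nat \<Rightarrow> bool)) + nat set" assume "x \<in> range Inl \<union> Inr ` \<A>"
      then show "x \<in> topspace (Xsp \<A>)"
      proof
        assume "x \<in> range Inl"
        then obtain n k where x: "x = Inl (n, k)" by auto
        have "Inl ` ({n} \<times> UNIV) \<in> {Inl ` ({n} \<times> C) | n C. openin Cantor C}"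
          using opC by blast
        then show ?thesis unfolding Xsp_def topology_generated_by_topspace
          by (rule UnionI[OF UnI1]) (simp add: x)
      next
        assume "x \<in> Inr ` \<A>"
        then obtain A where x: "x = Inr A" "A \<in> \<A>" by auto
        then have "insert (Inr A) (Inl ` ({m\<in>A. 0 \<le> m} \<times> UNIV)) \<in>
          {insert (Inr A) (Inl ` ({m\<in>A. n \<le> m} \<times> UNIV)) | A n. A \<in> \<A>}" by blast
        then show ?thesis unfolding Xsp_def topology_generated_by_topspace
          by (rule UnionI[OF UnI2]) (simp add: x)
      qed
    qed
  qed
  have topP: "topspace (Psi \<A>) = range Inl \<union> Inr ` \<A>"
  proof
    show "topspace (Psi \<A>) \<subseteq> range Inl \<union> Inr ` \<A>"
      unfolding Psi_def topology_generated_by_topspace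
    proof (rule Union_least)
      fix G assume "G \<in> {{Inl n} | n. True} \<union>
      {insert (Inr A) (Inl ` {m\<in>A. n \<le> m}) | A n. A \<in> \<A>}"
      then show "G \<subseteq> range Inl \<union> Inr ` \<A>"
        by (elim UnE CollectE exE conjE) auto
    qed
    show "range Inl \<union> Inr ` \<A> \<subseteq> topspace (Psi \<A>)"
    proof
      fix x :: "nat + nat set" assume "x \<in> range Inl \<union> Inr ` \<A>"
      then show "x \<in> topspace (Psi \<A>)"
      proof
        assume "x \<in> range Inl"
        then obtain n where x: "x = Inl n" by auto
        have "{Inl n} \<in> {{Inl n} | n. True}" by blast
        then show ?thesis unfolding Psi_def topology_generated_by_topspace
          by (rule UnionI[OF UnI1]) (simp add: x)
      next
        assume "x \<in> Inr ` \<A>"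
        then obtain A where x: "x = Inr A" "A \<in> \<A>" by auto
        then have "insert (Inr A) (Inl ` {m\<in>A. 0 \<le> m}) \<in>
          {insert (Inr A) (Inl ` {m\<in>A. n \<le> m}) | A n. A \<in> \<A>}" by blast
        then show ?thesis unfolding Psi_def topology_generated_by_topspace
          by (rule UnionI[OF UnI2]) (simp add: x)
      qed
    qed
  qed
  have vals: "\<xi> x \<in> {0..1}" if "x \<in> topspace (Xsp \<A>)" for x
    using cont that by (auto simp: continuous_map_def)
  define \<eta> where "\<eta> y = (case y of Inl n \<Rightarrow> (if \<exists>k. \<xi> (Inl (n, k)) = 0 then 0
      else \<xi> (Inl (n, \<lambda>_. False))) | Inr A \<Rightarrow> \<xi> (Inr A))" for y
  have etaval: "\<eta> y \<in> {0..1}" if "y \<in> topspace (Psi \<A>)" for y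
    using that vals unfolding topP topX \<eta>_def by (auto split: sum.splits)
  have "continuous_map (Psi \<A>) (top_of_set {0..1::real}) \<eta>"
    unfolding continuous_map
  proof (intro conjI allI impI)
    show "\<eta> ` topspace (Psi \<A>) \<subseteq> topspace (top_of_set {0..1})"
      using etaval by auto
  next
    fix U assume U: "openin (top_of_set {0..1::real}) U"
    show "openin (Psi \<A>) {x \<in> topspace (Psi \<A>). \<eta> x \<in> U}"
    proof (subst openin_subopen, intro ballI)
      fix y assume y: "y \<in> {x \<in> topspace (Psi \<A>). \<eta> x \<in> U}"
      show "\<exists>T. openin (Psi \<A>) T \<and> y \<in> T \<and> T \<subseteq> {x \<in> topspace (Psi \<A>). \<eta> x \<in> U}"
      proof (cases y)
        case (Inl n)
        have "openin (Psi \<A>) {Inl n}" unfolding Psi_def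
          by (rule topology_generated_by_Basis) blast
        then show ?thesis using y Inl by auto
      next
        case (Inr A)
        have A: "A \<in> \<A>" using y Inr topP by auto
        have "\<xi> (Inr A) \<in> U" using y Inr by (simp add: \<eta>_def)
        then obtain e where e: "e > 0" "\<And>t. t \<in> {0..1} \<Longrightarrow> dist t (\<xi> (Inr A)) < e \<Longrightarrow> t \<in> U"
          using U unfolding openin_euclidean_subtopology_iff by metis
        define V where "V = {x \<in> topspace (Xsp \<A>). \<xi> x \<in> {0..1} \<inter> ball (\<xi> (Inr A)) e}"
        have "openin (Xsp \<A>) V" unfolding V_def
          using cont unfolding continuous_map
          by (meson open_ball openin_open_Int)
        then have gV: "generate_topology_on
         ({Inl ` ({n} \<times> C) | n C. openin Cantor C} \<union>
          {insert (Inr A) (Inl ` ({m\<in>A. n \<le> m} \<times> UNIV)) | A n. A \<in> \<A>}) V"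
          unfolding Xsp_def openin_topology_generated_by_iff .
        have "Inr A \<in> V" unfolding V_def using A topX vals e(1) by auto
        from nbhdX[OF gV this] obtain n where
          n: "insert (Inr A) (Inl ` ({m\<in>A. n \<le> m} \<times> UNIV)) \<subseteq> V" by blast
        define T where "T = insert (Inr A) (Inl ` {m\<in>A. n \<le> m})"
        have "openin (Psi \<A>) T" unfolding Psi_def T_def
          by (rule topology_generated_by_Basis) (use A in blast)
        moreover have "T \<subseteq> {x \<in> topspace (Psi \<A>). \<eta> x \<in> U}"
        proof
          fix x assume "x \<in> T"
          then consider "x = Inr A" | m where "x = Inl m" "m \<in> A" "n \<le> m"
            unfolding T_def by auto
          then show "x \<in> {x \<in> topspace (Psi \<A>). \<eta> x \<in> U}"
          proof cases
            case 1 then show ?thesis using y Inr by auto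
          next
            case 2
            have inV: "\<And>k. Inl (m, k) \<in> V" using n 2 by auto
            have xt: "x \<in> topspace (Psi \<A>)" using 2 topP by auto
            have "\<eta> x \<in> {0..1} \<and> dist (\<eta> x) (\<xi> (Inr A)) < e"
            proof (cases "\<exists>k. \<xi> (Inl (m, k)) = 0")
              case True
              then obtain k where "\<xi> (Inl (m, k)) = 0" by blast
              moreover have "Inl (m, k) \<in> V" by (rule inV)
              ultimately show ?thesis using 2 True unfolding V_def \<eta>_def
                by (auto simp: dist_commute)
            next
              case False
              have "Inl (m, \<lambda>_. False) \<in> V" by (rule inV)
              then show ?thesis using 2 False unfolding V_def \<eta>_def
                by (auto simp: dist_commute)
            qed
            then show ?thesis using e(2) xt by auto
          qed
        qed
        ultimately show ?thesis using Inr by (auto simp: T_def)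
      qed
    qed
  qed
  moreover have "fmap ` Z = {x \<in> topspace (Psi \<A>). \<eta> x = 0}"
  proof
    show "fmap ` Z \<subseteq> {x \<in> topspace (Psi \<A>). \<eta> x = 0}"
    proof
      fix y assume "y \<in> fmap ` Z"
      then obtain x where x: "x \<in> Z" "y = fmap x" by blast
      show "y \<in> {x \<in> topspace (Psi \<A>). \<eta> x = 0}"
      proof (cases x)
        case (Inl p)
        then obtain n k where "x = Inl (n, k)" by (cases p) auto
        then show ?thesis using x Zd topP by (auto simp: \<eta>_def)
      next
        case (Inr A)
        then show ?thesis using x Zd topP topX by (auto simp: \<eta>_def)
      qed
    qed
    show "{x \<in> topspace (Psi \<A>). \<eta> x = 0} \<subseteq> fmap ` Z"
    proof
      fix y assume y: "y \<in> {x \<in> topspace (Psi \<A>). \<eta> x = 0}"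
      show "y \<in> fmap ` Z"
      proof (cases y)
        case (Inl n)
        have "\<exists>k. \<xi> (Inl (n, k)) = 0"
        proof (rule ccontr)
          assume "\<nexists>k. \<xi> (Inl (n, k)) = 0"
          then show False using y Inl by (simp add: \<eta>_def)
        qed
        then obtain k where "\<xi> (Inl (n, k)) = 0" by blast
        then have "Inl (n, k) \<in> Z" using Zd topX by auto
        then show ?thesis using Inl by (metis fmap.simps(1) image_eqI)
      next
        case (Inr A)
        then have "Inr A \<in> Z" using Zd topX topP y by (auto simp: \<eta>_def)
        then show ?thesis using Inr by (metis fmap.simps(2) image_eqI)
      qed
    qed
  qed
  ultimately show ?thesis unfolding zero_set_in_def by blast
qed

end
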